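(* Let $d \ge 1$ be an integer and let $n$ be an even integer with $n \ge 2d+2$, except that $n = 2d+4$ is excluded when $d$ is odd. Then a spherical 3-design on $S^d$ of size $n$ exists.
   Context: $S^d$ denotes the unit sphere in $\mathbb{R}^{d+1}$. A spherical $t$-design on $S^d$ of size $n$ is a finite collection $X$ of $n$ points of $S^d$ such that the average of every polynomial $f(x_0,\dots,x_d)$ of degree at most $t$ over $S^d$ (with respect to surface measure) equals $\frac{1}{|X|}\sum_{x\in X} f(x)$. *)

theory Defs
  imports "HOL-Analysis.Analysis"
begin

text \<open>Points of S^d live in real^'n with CARD('n) = d+1.
  A polynomial function of degree at most t in the coordinates x_i:
  a finite linear combination of monomials prod_i x_i^(alpha i) with
  total degree sum_i alpha i at most t.\<close>
definition poly_fun_deg_le :: "nat \<Rightarrow> (real^'n::finite \<Rightarrow> real) \<Rightarrow> bool" where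
  "poly_fun_deg_le t f \<longleftrightarrow>
     (\<exists>(A :: ('n \<Rightarrow> nat) set) (c :: ('n \<Rightarrow> nat) \<Rightarrow> real).
        finite A \<and> (\<forall>\<alpha>\<in>A. (\<Sum>i\<in>UNIV. \<alpha> i) \<le> t) \<and>
        (\<forall>x. f x = (\<Sum>\<alpha>\<in>A. c \<alpha> * (\<Prod>i\<in>UNIV. (x $ i) ^ (\<alpha> i)))))"

text \<open>Average of f over the unit sphere with respect to (normalized) surface
  measure, expressed via the cone measure: the normalized surface measure on
  the sphere is the push-forward of normalized Lebesgue measure on the unit
  ball under x \<mapsto> x / norm x.\<close>
definition sphere_avg :: "(real^'n::finite \<Rightarrow> real) \<Rightarrow> real" where
  "sphere_avg f =
     (LINT x : ball 0 1 | lebesgue. f (x /\<^sub>R norm x)) / measure lebesgue (ball (0::real^'n) 1)"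

definition spherical_design :: "nat \<Rightarrow> (real^'n::finite) set \<Rightarrow> bool" where
  "spherical_design t X \<longleftrightarrow>
     finite X \<and> X \<noteq> {} \<and> X \<subseteq> sphere 0 1 \<and>
     (\<forall>f. poly_fun_deg_le t f \<longrightarrow> sphere_avg f = (\<Sum>x\<in>X. f x) / real (card X))"

end

theory Submission
  imports Defs
begin

lemma prod_Basis_cart: "(\<Prod>b\<in>(Basis::(real^'n) set). f b) = (\<Prod>i\<in>UNIV. f (axis i 1))"
proof -
  have "Basis = range (\<lambda>i. axis i (1::real))" by (auto simp: Basis_vec_def)
  moreover have "inj (\<lambda>i. axis i (1::real))" by (auto simp: inj_def axis_eq_axis)
  ultimately show ?thesis by (metis (no_types, lifting) prod.reindex_cong)
qed

lemma linear_signed_perm: "linear (\<lambda>x::real^'n. \<chi> j. s j * x$(p j))"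
  by (auto simp: linear_iff vec_eq_iff algebra_simps)

lemma lborel_signed_perm:
  fixes p :: "'n::finite \<Rightarrow> 'n" and s :: "'n \<Rightarrow> real"
  assumes "bij p" "\<forall>j. s j = 1 \<or> s j = -1"
  shows "distr lborel borel (\<lambda>x::real^'n. \<chi> j. s j * x$(p j)) = lborel"
proof (rule lborel_eqI[symmetric])
  let ?T = "\<lambda>x::real^'n. \<chi> j. s j * x$(p j)"
  define q where "q = inv p"
  have pq: "p (q k) = k" for k using assms(1) unfolding q_def by (simp add: surj_f_inv_f bij_is_surj)
  have qp: "q (p k) = k" for k using assms(1) unfolding q_def by (simp add: inv_f_f bij_is_inj)
  have bq: "bij q" using assms(1) unfolding q_def by (simp add: bij_imp_bij_inv)
  have meas: "?T \<in> borel_measurable borel"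
    using linear_signed_perm[of s p] by (intro borel_measurable_continuous_onI linear_continuous_on) (simp add: linear_linear)
  fix l u :: "real^'n" assume le: "\<And>b. b \<in> Basis \<Longrightarrow> l \<bullet> b \<le> u \<bullet> b"
  then have le': "l$k \<le> u$k" for k using le[of "axis k 1"] by (simp add: cart_eq_inner_axis)
  define l' where "l' = (\<chi> k. if s (q k) = 1 then l$(q k) else - (u$(q k)))"
  define u' where "u' = (\<chi> k. if s (q k) = 1 then u$(q k) else - (l$(q k)))"
  have pre: "?T -` box l u = box l' u'"
  proof (intro set_eqI iffI)
    fix x assume "x \<in> ?T -` box l u"
    then have h: "l$j < s j * x$(p j) \<and> s j * x$(p j) < u$j" for j by (simp add: mem_box_cart)
    show "x \<in> box l' u'" unfolding mem_box_cart l'_def u'_def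
    proof
      fix k show "(\<chi> k. if s (q k) = 1 then l$(q k) else - (u$(q k))) $ k < x $ k \<and> x $ k < (\<chi> k. if s (q k) = 1 then u$(q k) else - (l$(q k))) $ k"
        using h[of "q k"] assms(2)[rule_format, of "q k"] by (auto simp: pq)
    qed
  next
    fix x assume "x \<in> box l' u'"
    then have h: "l'$k < x$k \<and> x$k < u'$k" for k by (simp add: mem_box_cart)
    show "x \<in> ?T -` box l u" unfolding mem_box_cart vimage_def mem_Collect_eq
    proof
      fix j show "l $ j < ?T x $ j \<and> ?T x $ j < u $ j"
        using h[of "p j"] assms(2)[rule_format, of j] by (auto simp: qp l'_def u'_def)
    qed
  qed
  have diff: "(u' - l')$k = (u - l)$(q k)" for k
    using assms(2)[rule_format, of "q k"] by (auto simp: l'_def u'_def)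
  have "l'$k \<le> u'$k" for k using diff[of k] le'[of "q k"] by simp
  then have lu': "\<forall>b\<in>Basis. l' \<bullet> b \<le> u' \<bullet> b" by (auto simp: Basis_vec_def inner_axis)
  have "emeasure (distr lborel borel ?T) (box l u) = emeasure lborel (box l' u')"
    using meas by (simp add: emeasure_distr pre)
  also have "\<dots> = (\<Prod>k\<in>UNIV. (u - l)$(q k))"
    using lu' diff by (simp add: emeasure_lborel_box_eq prod_Basis_cart cart_eq_inner_axis[symmetric])
  also have "\<dots> = (\<Prod>k\<in>UNIV. (u - l)$k)"
    using prod.reindex_bij_betw[of q UNIV UNIV "\<lambda>k. (u-l)$k"] bq by (simp add: bij_betw_def)
  also have "\<dots> = (\<Prod>b\<in>Basis. (u - l) \<bullet> b)"
    by (simp add: prod_Basis_cart cart_eq_inner_axis)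
  finally show "emeasure (distr lborel borel ?T) (box l u) = (\<Prod>b\<in>Basis. (u - l) \<bullet> b)" .
qed simp

lemma norm_signed_perm:
  fixes p :: "'n::finite \<Rightarrow> 'n" and s :: "'n \<Rightarrow> real"
  assumes "bij p" "\<forall>j. s j = 1 \<or> s j = -1"
  shows "norm (\<chi> j. s j * x$(p j)) = norm x"
proof -
  have "(\<Sum>j\<in>UNIV. (s j * x$(p j)) * (s j * x$(p j))) = (\<Sum>j\<in>UNIV. x$(p j) * x$(p j))"
  proof (rule sum.cong)
    fix j show "(s j * x$(p j)) * (s j * x$(p j)) = x$(p j) * x$(p j)"
      using assms(2)[rule_format, of j] by auto
  qed simp
  also have "\<dots> = (\<Sum>k\<in>UNIV. x$k * x$k)"
    using sum.reindex_bij_betw[of p UNIV UNIV "\<lambda>k. x$k * x$k"] assms(1) by (simp add: bij_betw_def)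
  finally show ?thesis by (simp add: norm_eq_sqrt_inner inner_vec_def)
qed

definition Gf :: "(real^'n::finite \<Rightarrow> real) \<Rightarrow> real^'n \<Rightarrow> real" where
  "Gf h x = indicator (ball 0 1) x * h (x /\<^sub>R norm x)"

lemma Gf_measurable[measurable]:
  fixes h :: "real^'n::finite \<Rightarrow> real"
  assumes [measurable]: "h \<in> borel_measurable borel"
  shows "Gf h \<in> borel_measurable borel"
proof -
  have "(\<lambda>x::real^'n. x /\<^sub>R norm x) \<in> borel_measurable borel" by measurable
  then have "(\<lambda>x::real^'n. h (x /\<^sub>R norm x)) \<in> borel_measurable borel"
    using measurable_compose assms by blast
  moreover have "indicator (ball (0::real^'n) 1) \<in> borel_measurable borel"
    by (intro borel_measurable_indicator) auto
  ultimately show ?thesis unfolding Gf_def[abs_def] by (intro borel_measurable_times) auto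
qed

lemma sphere_avg_lborel:
  fixes h :: "real^'n::finite \<Rightarrow> real"
  assumes [measurable]: "h \<in> borel_measurable borel"
  shows "sphere_avg h = integral\<^sup>L lborel (Gf h) / measure lebesgue (ball (0::real^'n::finite) 1)"
proof -
  have eq: "(\<lambda>x. indicator (ball 0 1) x * h (x /\<^sub>R norm x)) = Gf h" by (auto simp: Gf_def)
  have "sphere_avg h = integral\<^sup>L lebesgue (Gf h) / measure lebesgue (ball (0::real^'n::finite) 1)"
    by (simp add: sphere_avg_def set_lebesgue_integral_def eq)
  then show ?thesis using Gf_measurable[OF assms] by (simp add: integral_completion)
qed

lemma Gf_integrable:
  fixes h :: "real^'n::finite \<Rightarrow> real"
  assumes [measurable]: "h \<in> borel_measurable borel"
    and bnd: "\<And>y. norm y \<le> 1 \<Longrightarrow> \<bar>h y\<bar> \<le> B"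
  shows "integrable lborel (Gf h)"
proof -
  have "integrable lborel (\<lambda>x::real^'n. indicator (ball 0 1) x *\<^sub>R h (x /\<^sub>R norm x))"
  proof (rule integrableI_bounded_set_indicator)
    show "emeasure lborel (ball (0::real^'n) 1) < \<infinity>"
      using emeasure_bounded_finite[of "ball (0::real^'n) 1"] by (simp add: top.not_eq_extremum)
    have "norm (x /\<^sub>R norm x) \<le> 1" for x :: "real^'n" by (cases "x = 0") auto
    then show "AE x in lborel. x \<in> ball 0 1 \<longrightarrow> norm (h (x /\<^sub>R norm x)) \<le> B"
      using bnd by auto
  qed auto
  then show ?thesis by (simp add: Gf_def[abs_def])
qed

lemma Gf_invariant:
  fixes p :: "'n::finite \<Rightarrow> 'n" and s :: "'n \<Rightarrow> real"
  assumes "bij p" "\<forall>j. s j = 1 \<or> s j = -1" and [measurable]: "h \<in> borel_measurable borel"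
  shows "integral\<^sup>L lborel (Gf h) = integral\<^sup>L lborel (Gf (\<lambda>y::real^'n. h (\<chi> j. s j * y$(p j))))"
proof -
  let ?T = "\<lambda>x::real^'n. \<chi> j. s j * x$(p j)"
  have meas[measurable]: "?T \<in> borel_measurable borel"
    using linear_signed_perm[of s p] by (intro borel_measurable_continuous_onI linear_continuous_on) (simp add: linear_linear)
  have "integral\<^sup>L lborel (Gf h) = integral\<^sup>L (distr lborel borel ?T) (Gf h)"
    using lborel_signed_perm[OF assms(1,2)] by simp
  also have "\<dots> = integral\<^sup>L lborel (\<lambda>x. Gf h (?T x))"
    by (rule integral_distr) auto
  also have "\<dots> = integral\<^sup>L lborel (Gf (\<lambda>y. h (?T y)))"
  proof (rule Bochner_Integration.integral_cong[OF refl])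
    fix x :: "real^'n"
    have n: "norm (?T x) = norm x" using norm_signed_perm[OF assms(1,2)] .
    have "?T x /\<^sub>R norm x = ?T (x /\<^sub>R norm x)"
      by (simp add: vec_eq_iff)
    then show "Gf h (?T x) = Gf (\<lambda>y. h (?T y)) x"
      unfolding Gf_def using n by (simp add: indicator_def)
  qed
  finally show ?thesis .
qed
definition mono :: "('n::finite \<Rightarrow> nat) \<Rightarrow> real^'n \<Rightarrow> real" where
  "mono a x = (\<Prod>i\<in>UNIV. (x$i)^(a i))"

lemma mono_measurable[measurable]: "mono a \<in> borel_measurable borel"
  unfolding mono_def[abs_def] by measurable

lemma mono_bound: "norm (y::real^'n::finite) \<le> 1 \<Longrightarrow> \<bar>mono a y\<bar> \<le> 1"
proof -
  assume y: "norm y \<le> 1"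
  have "\<bar>mono a y\<bar> = (\<Prod>i\<in>UNIV. \<bar>y$i\<bar>^(a i))" by (simp add: mono_def abs_prod power_abs)
  also have "\<dots> \<le> 1"
  proof (rule prod_le_1)
    fix i
    have "\<bar>y$i\<bar> \<le> 1" using component_le_norm_cart[of y i] y by simp
    then show "0 \<le> \<bar>y$i\<bar>^(a i) \<and> \<bar>y$i\<bar>^(a i) \<le> 1" by (simp add: power_le_one)
  qed
  finally show ?thesis .
qed

lemma mono_neg: "mono a (\<chi> j. (-1) * (y::real^'n::finite)$(id j)) = (-1)^(\<Sum>i\<in>UNIV. a i) * mono a y"
proof -
  have "mono a (\<chi> j. (-1) * y$(id j)) = (\<Prod>i\<in>UNIV. (-1)^(a i) * (y$i)^(a i))"
    unfolding mono_def
  proof (rule prod.cong[OF refl])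
    fix i show "((\<chi> j. (-1) * y$(id j))$i)^(a i) = (-1)^(a i) * (y$i)^(a i)"
      using power_minus[of "y$i" "a i"] by simp
  qed
  also have "\<dots> = (\<Prod>i\<in>UNIV. (-1::real)^(a i)) * (\<Prod>i\<in>UNIV. (y$i)^(a i))"
    by (rule prod.distrib)
  also have "(\<Prod>i\<in>UNIV. (-1::real)^(a i)) = (-1)^(\<Sum>i\<in>UNIV. a i)"
    by (rule power_sum[symmetric])
  finally show ?thesis by (simp add: mono_def)
qed

lemma mono_refl:
  "mono a (\<chi> j. (if j = k then -1 else 1) * (y::real^'n::finite)$(id j)) = (-1)^(a k) * mono a y"
proof -
  have "mono a (\<chi> j. (if j = k then -1 else 1) * y$(id j)) = (\<Prod>i\<in>UNIV. (if i = k then (-1)^(a i) else 1) * (y$i)^(a i))"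
    unfolding mono_def
  proof (rule prod.cong[OF refl])
    fix i show "((\<chi> j. (if j = k then -1 else 1) * y$(id j))$i)^(a i) = (if i = k then (-1)^(a i) else 1) * (y$i)^(a i)"
      using power_minus[of "y$i" "a i"] by (cases "i = k") simp_all
  qed
  also have "\<dots> = (\<Prod>i\<in>UNIV. (if i = k then (-1::real)^(a i) else 1)) * (\<Prod>i\<in>UNIV. (y$i)^(a i))"
    by (rule prod.distrib)
  also have "(\<Prod>i\<in>UNIV. (if i = k then (-1::real)^(a i) else 1)) = (-1)^(a k)"
    by (subst prod.delta) auto
  finally show ?thesis by (simp add: mono_def)
qed

lemma Gf_uminus: "Gf (\<lambda>y. - h y) = (\<lambda>x. - Gf h x)"
  by (auto simp: Gf_def)

lemma Gf_cmult: "Gf (\<lambda>y. c * h y) = (\<lambda>x. c * Gf h x)"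
  by (auto simp: Gf_def)

lemma int_mono_odd:
  assumes "odd (\<Sum>i\<in>UNIV. a i)"
  shows "integral\<^sup>L lborel (Gf (mono (a::'n::finite \<Rightarrow> nat))) = 0"
proof -
  have "integral\<^sup>L lborel (Gf (mono a)) = integral\<^sup>L lborel (Gf (\<lambda>y::real^'n. mono a (\<chi> j. (-1) * y$(id j))))"
    by (rule Gf_invariant[where p=id]) auto
  also have "(\<lambda>y::real^'n. mono a (\<chi> j. (-1) * y$(id j))) = (\<lambda>y. - mono a y)"
    using assms by (simp only: mono_neg) simp
  also have "integral\<^sup>L lborel (Gf (\<lambda>y. - mono a y)) = - integral\<^sup>L lborel (Gf (mono a))"
    by (simp add: Gf_uminus)
  finally show ?thesis by simp
qed

lemma int_mono_odd_comp:
  assumes "odd (a k)"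
  shows "integral\<^sup>L lborel (Gf (mono (a::'n::finite \<Rightarrow> nat))) = 0"
proof -
  have "integral\<^sup>L lborel (Gf (mono a)) = integral\<^sup>L lborel (Gf (\<lambda>y::real^'n. mono a (\<chi> j. (if j = k then -1 else 1) * y$(id j))))"
    by (rule Gf_invariant[where p=id]) auto
  also have "(\<lambda>y::real^'n. mono a (\<chi> j. (if j = k then -1 else 1) * y$(id j))) = (\<lambda>y. - mono a y)"
    using assms by (simp only: mono_refl) simp
  also have "integral\<^sup>L lborel (Gf (\<lambda>y. - mono a y)) = - integral\<^sup>L lborel (Gf (mono a))"
    by (simp add: Gf_uminus)
  finally show ?thesis by simp
qed

lemma int_sq_swap:
  "integral\<^sup>L lborel (Gf (\<lambda>y::real^'n::finite. (y$i)^2)) = integral\<^sup>L lborel (Gf (\<lambda>y::real^'n. (y$k)^2))"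
proof -
  have "integral\<^sup>L lborel (Gf (\<lambda>y::real^'n::finite. (y$i)^2)) =
     integral\<^sup>L lborel (Gf (\<lambda>y::real^'n. ((\<chi> j. 1 * y $ (Transposition.transpose i k j)) $ i)^2))"
    by (rule Gf_invariant) auto
  then show ?thesis by simp
qed

lemma int_sq_sum:
  "(\<Sum>i\<in>UNIV. integral\<^sup>L lborel (Gf (\<lambda>y::real^'n::finite. (y$i)^2))) = measure lborel (ball (0::real^'n) 1)"
proof -
  have int: "integrable lborel (Gf (\<lambda>y::real^'n::finite. (y$i)^2))" for i
  proof (rule Gf_integrable[where B=1])
    fix y :: "real^'n" assume "norm y \<le> 1"
    then have "\<bar>y$i\<bar> \<le> 1" using component_le_norm_cart[of y i] by simp
    then show "\<bar>(y$i)^2\<bar> \<le> 1" by (simp add: abs_square_le_1)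
  qed simp
  have "(\<Sum>i\<in>UNIV. integral\<^sup>L lborel (Gf (\<lambda>y::real^'n::finite. (y$i)^2))) =
      integral\<^sup>L lborel (\<lambda>x. \<Sum>i\<in>UNIV. Gf (\<lambda>y::real^'n::finite. (y$i)^2) x)"
    using int by (simp add: integral_sum)
  also have "\<dots> = integral\<^sup>L lborel (indicator (ball (0::real^'n) 1))"
  proof (rule integral_cong_AE)
    show "AE x in lborel. (\<Sum>i\<in>UNIV. Gf (\<lambda>y::real^'n. (y$i)^2) x) = indicator (ball (0::real^'n) 1) x"
    proof (rule eventually_mono[OF AE_lborel_singleton[of 0]])
      fix x :: "real^'n" assume "x \<noteq> 0"
      then have "(\<Sum>i\<in>UNIV. ((x /\<^sub>R norm x)$i)^2) = 1"
        using norm_eq_1[of "x /\<^sub>R norm x"] by (simp add: inner_vec_def power2_eq_square)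
      then show "(\<Sum>i\<in>UNIV. Gf (\<lambda>y::real^'n. (y$i)^2) x) = indicator (ball (0::real^'n) 1) x"
        by (simp add: Gf_def sum_distrib_left[symmetric])
    qed
  qed (auto intro: borel_measurable_indicator)
  finally show ?thesis by simp
qed
lemma mono_uminus: "mono a (- (y::real^'n::finite)) = (-1)^(\<Sum>i\<in>UNIV. a i) * mono a y"
proof -
  have "- y = (\<chi> j. (-1) * y$(id j))" by (simp add: vec_eq_iff)
  then show ?thesis by (simp only: mono_neg)
qed

lemma mono_zero: "(\<Sum>i\<in>UNIV. a i) = 0 \<Longrightarrow> mono a y = 1"
  by (simp add: mono_def)

lemma mono_sq:
  assumes "(\<Sum>j\<in>UNIV. a j) = 2" "a (i::'n::finite) = 2"
  shows "mono a y = (y$i)^2"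
proof -
  have "(\<Sum>j\<in>UNIV. a j) = a i + (\<Sum>j\<in>UNIV-{i}. a j)" by (simp add: sum.remove[of UNIV i])
  then have "\<forall>j\<in>UNIV-{i}. a j = 0" using assms by simp
  then have "(\<Prod>j\<in>UNIV-{i}. (y$j)^(a j)) = 1" by simp
  then show ?thesis using assms(2) by (simp add: mono_def prod.remove[of UNIV i] power2_eq_square)
qed

lemma mono_mixed:
  assumes "(\<Sum>j\<in>UNIV. a j) = 2" "a (i::'n::finite) = 1"
  shows "\<exists>k. k \<noteq> i \<and> (\<forall>y. mono a y = y$i * y$k)"
proof -
  have s1: "(\<Sum>j\<in>UNIV-{i}. a j) = 1" using assms by (simp add: sum.remove[of UNIV i])
  then obtain k where k: "k \<in> UNIV - {i}" "a k \<noteq> 0" by (metis sum.neutral zero_neq_one)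
  have e: "(\<Sum>j\<in>UNIV-{i}. a j) = a k + (\<Sum>j\<in>UNIV-{i}-{k}. a j)" using k by (simp add: sum.remove[of "UNIV-{i}" k])
  have ak: "a k = 1" using e s1 k(2) by linarith
  have r0: "(\<Sum>j\<in>UNIV-{i}-{k}. a j) = 0" using e s1 k(2) by linarith
  have rest: "\<forall>j\<in>UNIV-{i}-{k}. a j = 0" using r0 sum_eq_0_iff[of "UNIV-{i}-{k}" a] by simp
  have "mono a y = y$i * y$k" for y
  proof -
    have "(\<Prod>j\<in>UNIV-{i}-{k}. (y$j)^(a j)) = 1" using rest by simp
    then have "(\<Prod>j\<in>UNIV-{i}. (y$j)^(a j)) = y$k" using k ak by (simp add: prod.remove[of "UNIV-{i}" k])
    then show ?thesis using assms(2) by (simp add: mono_def prod.remove[of UNIV i] power2_eq_square)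
  qed
  then show ?thesis using k by blast
qed

lemma shape2:
  assumes "(\<Sum>j\<in>UNIV. a j) = (2::nat)"
  shows "(\<exists>i::'n::finite. a i = 2) \<or> (\<exists>i::'n. a i = 1)"
proof -
  obtain i where "a i \<noteq> 0" using assms by (metis sum.neutral zero_neq_numeral)
  moreover have "a i \<le> 2" using assms member_le_sum[of i UNIV a] by simp
  ultimately have "a i = 1 \<or> a i = 2" by auto
  then show ?thesis by blast
qed

lemma measure_ball_pos: "0 < measure lborel (ball (0::real^'n::finite) 1)"
  using content_ball_pos[of 1 "0::real^'n"] by simp

lemma int_sq:
  "integral\<^sup>L lborel (Gf (\<lambda>y::real^'n::finite. (y$i)^2)) = measure lborel (ball (0::real^'n) 1) / CARD('n)"
proof -
  have "measure lborel (ball (0::real^'n) 1) = (\<Sum>k\<in>UNIV. integral\<^sup>L lborel (Gf (\<lambda>y::real^'n::finite. (y$k)^2)))"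
    by (rule int_sq_sum[symmetric])
  also have "\<dots> = (\<Sum>k\<in>(UNIV::'n set). integral\<^sup>L lborel (Gf (\<lambda>y::real^'n::finite. (y$i)^2)))"
    by (rule sum.cong[OF refl]) (rule int_sq_swap)
  finally show ?thesis by simp
qed

lemma sum_sym:
  fixes Y :: "(real^'n::finite) set"
  assumes "finite Y" "\<forall>y\<in>Y. - y \<notin> Y"
  shows "(\<Sum>x\<in>Y \<union> uminus ` Y. g x) = (\<Sum>y\<in>Y. g y) + (\<Sum>y\<in>Y. g (- y))"
    and "card (Y \<union> uminus ` Y) = 2 * card Y"
proof -
  have disj: "Y \<inter> uminus ` Y = {}" using assms(2) by force
  have inj: "inj_on uminus Y" by (simp add: inj_on_def)
  show "(\<Sum>x\<in>Y \<union> uminus ` Y. g x) = (\<Sum>y\<in>Y. g y) + (\<Sum>y\<in>Y. g (- y))"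
    using assms(1) disj inj by (simp add: sum.union_disjoint sum.reindex)
  show "card (Y \<union> uminus ` Y) = 2 * card Y"
    using assms(1) disj inj by (simp add: card_Un_disjoint card_image)
qed

lemma mono_design:
  fixes Y :: "(real^'n::finite) set"
  assumes fin: "finite Y" and ne: "Y \<noteq> {}" and anti: "\<forall>y\<in>Y. - y \<notin> Y"
    and frame: "\<forall>i k. (\<Sum>y\<in>Y. y$i * y$k) = (if i = k then real (card Y) / CARD('n) else 0)"
    and deg: "(\<Sum>i\<in>UNIV. a i) \<le> 3"
  shows "integral\<^sup>L lborel (Gf (mono a)) / measure lborel (ball (0::real^'n) 1)
     = (\<Sum>x\<in>Y \<union> uminus ` Y. mono a x) / real (card (Y \<union> uminus ` Y))"
proof -
  let ?V = "measure lborel (ball (0::real^'n) 1)"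
  let ?N = "\<Sum>i\<in>UNIV. a i"
  have V: "?V > 0" by (rule measure_ball_pos)
  have cY: "card Y > 0" using fin ne by (simp add: card_gt_0_iff)
  have sX: "(\<Sum>x\<in>Y \<union> uminus ` Y. mono a x) = (1 + (-1)^?N) * (\<Sum>y\<in>Y. mono a y)"
    using sum_sym(1)[OF fin anti, of "mono a"] by (simp add: mono_uminus sum_distrib_right[symmetric] algebra_simps)
  have cX: "card (Y \<union> uminus ` Y) = 2 * card Y" by (rule sum_sym(2)[OF fin anti])
  show ?thesis
  proof (cases "odd ?N")
    case True
    then show ?thesis using int_mono_odd[OF True] sX by simp
  next
    case False
    have "\<And>N::nat. \<not> odd N \<Longrightarrow> N \<le> 3 \<Longrightarrow> N = 0 \<or> N = 2" by presburger
    then have "?N = 0 \<or> ?N = 2" using deg False by blast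
    then show ?thesis
    proof
      assume N0: "?N = 0"
      have "Gf (mono a) = indicator (ball 0 1)"
        using mono_zero[OF N0] by (auto simp: Gf_def)
      then have "integral\<^sup>L lborel (Gf (mono a)) = ?V" by simp
      then show ?thesis using V cY sX cX mono_zero[OF N0] by simp
    next
      assume N2: "?N = 2"
      then have sX2: "(\<Sum>x\<in>Y \<union> uminus ` Y. mono a x) = 2 * (\<Sum>y\<in>Y. mono a y)"
        using sX by simp
      from shape2[OF N2] show ?thesis
      proof
        assume "\<exists>i. a i = 2"
        then obtain i where ai: "a i = 2" by blast
        have m: "mono a = (\<lambda>y. (y$i)^2)" using mono_sq[OF N2 ai] by auto
        have "(\<Sum>y\<in>Y. mono a y) = real (card Y) / CARD('n)"
          using frame[rule_format, of i i] by (simp add: m power2_eq_square)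
        then show ?thesis using sX2 cX int_sq[of i] V cY m by simp
      next
        assume "\<exists>i. a i = 1"
        then obtain i where ai: "a i = 1" by blast
        obtain k where k: "k \<noteq> i" "\<And>y. mono a y = y$i * y$k" using mono_mixed[OF N2 ai] by blast
        have "(\<Sum>y\<in>Y. mono a y) = 0"
          using frame[rule_format, of i k] k by simp
        moreover have "integral\<^sup>L lborel (Gf (mono a)) = 0"
          by (rule int_mono_odd_comp[of a i]) (simp add: ai)
        ultimately show ?thesis using sX2 by simp
      qed
    qed
  qed
qed
lemma design_from_frame:
  fixes Y :: "(real^'n::finite) set"
  assumes fin: "finite Y" and ne: "Y \<noteq> {}" and sph: "Y \<subseteq> sphere 0 1" and anti: "\<forall>y\<in>Y. - y \<notin> Y"
    and frame: "\<forall>i k. (\<Sum>y\<in>Y. y$i * y$k) = (if i = k then real (card Y) / CARD('n) else 0)"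
  shows "spherical_design 3 (Y \<union> uminus ` Y)"
proof -
  let ?X = "Y \<union> uminus ` Y"
  let ?V = "measure lborel (ball (0::real^'n) 1)"
  have "?X \<subseteq> sphere 0 1" using sph by auto
  moreover have "finite ?X" "?X \<noteq> {}" using fin ne by auto
  moreover have "sphere_avg f = (\<Sum>x\<in>?X. f x) / real (card ?X)" if pf: "poly_fun_deg_le 3 f" for f
  proof -
    obtain A :: "('n \<Rightarrow> nat) set" and c where A: "finite A" "\<forall>\<alpha>\<in>A. (\<Sum>i\<in>UNIV. \<alpha> i) \<le> 3"
      and fx: "\<forall>x. f x = (\<Sum>\<alpha>\<in>A. c \<alpha> * (\<Prod>i\<in>UNIV. (x $ i) ^ (\<alpha> i)))"
      using pf unfolding poly_fun_deg_le_def by blast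
    have feq: "f = (\<lambda>x. \<Sum>\<alpha>\<in>A. c \<alpha> * mono \<alpha> x)" using fx by (auto simp: mono_def)
    have fm: "f \<in> borel_measurable borel" unfolding feq by measurable
    have int: "integrable lborel (Gf (mono \<alpha>))" for \<alpha> :: "'n \<Rightarrow> nat"
      by (rule Gf_integrable[where B=1]) (auto intro: mono_bound)
    have Geq: "Gf f = (\<lambda>x. \<Sum>\<alpha>\<in>A. c \<alpha> * Gf (mono \<alpha>) x)"
      unfolding feq Gf_def by (auto simp: sum_distrib_left algebra_simps)
    have "integral\<^sup>L lborel (Gf f) = (\<Sum>\<alpha>\<in>A. c \<alpha> * integral\<^sup>L lborel (Gf (mono \<alpha>)))"
      unfolding Geq using int by (subst Bochner_Integration.integral_sum) auto
    then have "sphere_avg f = (\<Sum>\<alpha>\<in>A. c \<alpha> * (integral\<^sup>L lborel (Gf (mono \<alpha>)) / ?V))"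
      using sphere_avg_lborel[OF fm] by (simp add: sum_divide_distrib)
    also have "\<dots> = (\<Sum>\<alpha>\<in>A. c \<alpha> * ((\<Sum>x\<in>?X. mono \<alpha> x) / real (card ?X)))"
      using mono_design[OF fin ne anti frame] A(2) by simp
    also have "\<dots> = (\<Sum>x\<in>?X. f x) / real (card ?X)"
      unfolding feq by (simp add: sum_divide_distrib sum_distrib_left sum.swap[of _ A] algebra_simps)
    finally show ?thesis .
  qed
  ultimately show ?thesis unfolding spherical_design_def by blast
qed
lemma cis_sum_zero:
  fixes m :: nat and z :: int
  assumes m: "0 < m" and nd: "\<not> int m dvd z"
  shows "(\<Sum>t<m. cis (2 * pi * real t * real_of_int z / real m)) = 0"
proof -
  define w where "w = cis (2 * pi * real_of_int z / real m)"
  have pw: "cis (2 * pi * real t * real_of_int z / real m) = w ^ t" for t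
    unfolding w_def Complex.DeMoivre by (rule arg_cong[where f=cis]) (simp add: field_simps)
  have wm: "w ^ m = 1"
  proof -
    have "w ^ m = cis (2 * pi * real_of_int z)" unfolding w_def using m by (simp add: Complex.DeMoivre)
    also have "\<dots> = 1" by (rule cis_multiple_2pi) simp
    finally show ?thesis .
  qed
  have w1: "w \<noteq> 1"
  proof
    assume "w = 1"
    then have "cos (2 * pi * real_of_int z / real m) = 1" unfolding w_def
      by (metis cis.sel(1) one_complex.sel(1))
    then obtain n :: int where n: "2 * pi * real_of_int z / real m = real_of_int n * 2 * pi"
      using cos_one_2pi_int by blast
    then have "real_of_int z = real_of_int n * real m" using m by (simp add: field_simps)
    then have "z = n * int m" by (metis of_int_eq_iff of_int_mult of_int_of_nat_eq)
    then show False using nd by simp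
  qed
  have "(\<Sum>t<m. cis (2 * pi * real t * real_of_int z / real m)) = (\<Sum>t<m. w ^ t)"
    by (simp add: pw)
  also have "\<dots> = 0" using geometric_sum[OF w1, of m] wm by simp
  finally show ?thesis .
qed

lemma cos_sum_zero:
  fixes m :: nat and z :: int
  assumes m: "0 < m" and nd: "\<not> int m dvd z"
  shows "(\<Sum>t<m. cos (2 * pi * real t * real_of_int z / real m - c)) = 0"
proof -
  have "(\<Sum>t<m. cos (2 * pi * real t * real_of_int z / real m - c))
      = Re (\<Sum>t<m. cis (2 * pi * real t * real_of_int z / real m) * cis (- c))"
    by (simp add: Re_sum cis_mult)
  also have "\<dots> = Re ((\<Sum>t<m. cis (2 * pi * real t * real_of_int z / real m)) * cis (- c))"
    by (simp add: sum_distrib_right)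
  also have "\<dots> = 0" using cis_sum_zero[OF m nd] by simp
  finally show ?thesis .
qed

lemma cos_prod_to_sum:
  fixes a b c c' :: real
  shows "cos (a - c) * cos (b - c') = (cos ((a - b) - (c - c')) + cos ((a + b) - (c + c'))) / 2"
  by (simp add: cos_diff cos_add sin_diff sin_add field_simps)

lemma sum_pairs:
  fixes f :: "nat \<Rightarrow> real" and K :: nat
  shows "(\<Sum>r<2*K. f r) = (\<Sum>j<K. f (2*j) + f (2*j+1))"
  by (induction K) (simp_all add: algebra_simps)
definition fr_e :: "nat \<Rightarrow> nat" where "fr_e D = (if even D then 1 else 2)"

definition fr_ang :: "nat \<Rightarrow> nat \<Rightarrow> nat \<Rightarrow> nat \<Rightarrow> real" where
  "fr_ang D m t j = pi * real t * real (2 * j + fr_e D) / real m"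

definition fr_phi :: "nat \<Rightarrow> nat \<Rightarrow> nat \<Rightarrow> nat \<Rightarrow> real" where
  "fr_phi D m t r = (if r < 2 * (D div 2)
      then sqrt (2 / real D) * cos (fr_ang D m t (r div 2) - real (r mod 2) * pi / 2)
      else sqrt (1 / real D))"

lemma fr_ang_add: "fr_ang D m t j + fr_ang D m t j' = 2 * pi * real t * real_of_int (int (j + j' + fr_e D)) / real m"
  unfolding fr_ang_def add_divide_distrib[symmetric]
  by (rule arg_cong[where f="\<lambda>x. x / real m"]) (simp add: algebra_simps)

lemma fr_ang_diff: "fr_ang D m t j - fr_ang D m t j' = 2 * pi * real t * real_of_int (int j - int j') / real m"
  unfolding fr_ang_def diff_divide_distrib[symmetric]
  by (rule arg_cong[where f="\<lambda>x. x / real m"]) (simp add: algebra_simps)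

lemma cos_minus_half_pi: "cos (x - real (1::nat) * pi / 2) = sin x"
  by (simp add: cos_diff)

lemma fr_norm:
  assumes "D \<ge> 1"
  shows "(\<Sum>r<D. (fr_phi D m t r)^2) = 1"
proof -
  define K where "K = D div 2"
  have pairs: "(\<Sum>r<2*K. (fr_phi D m t r)^2) = 2 * real K / real D"
  proof -
    have "(\<Sum>r<2*K. (fr_phi D m t r)^2) = (\<Sum>j<K. (fr_phi D m t (2*j))^2 + (fr_phi D m t (2*j+1))^2)"
      by (rule sum_pairs)
    also have "\<dots> = (\<Sum>j<K. 2 / real D)"
    proof (rule sum.cong[OF refl])
      fix j assume "j \<in> {..<K}"
      then have "2*j < 2 * (D div 2)" "2*j+1 < 2 * (D div 2)" by (auto simp: K_def)
      moreover have "(2*j) div 2 = j" "(2*j) mod 2 = 0" "(2*j+1) div 2 = j" "(2*j+1) mod 2 = 1" by auto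
      ultimately have "(fr_phi D m t (2*j))^2 + (fr_phi D m t (2*j+1))^2
         = (sqrt (2 / real D))^2 * ((cos (fr_ang D m t j))^2 + (cos (fr_ang D m t j - real (1::nat) * pi / 2))^2)"
        unfolding fr_phi_def by (simp only: if_True power_mult_distrib algebra_simps) simp
      also have "\<dots> = 2 / real D" by (simp only: cos_minus_half_pi) simp
      finally
      show "(fr_phi D m t (2*j))^2 + (fr_phi D m t (2*j+1))^2 = 2 / real D" .
    qed
    also have "\<dots> = 2 * real K / real D" by simp
    finally show ?thesis .
  qed
  show ?thesis
  proof (cases "even D")
    case True
    then have "D = 2 * K" by (simp add: K_def)
    then show ?thesis using pairs assms by simp
  next
    case False
    then have D: "D = Suc (2 * K)" by (simp add: K_def)
    have "(\<Sum>r<D. (fr_phi D m t r)^2) = (\<Sum>r<2*K. (fr_phi D m t r)^2) + (fr_phi D m t (2*K))^2"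
      by (simp add: D)
    also have "(fr_phi D m t (2*K))^2 = 1 / real D" unfolding fr_phi_def K_def by simp
    finally have "(\<Sum>r<D. (fr_phi D m t r)^2) = 2 * real K / real D + 1 / real D" using pairs by simp
    also have "\<dots> = (2 * real K + 1) / real D" by (simp add: add_divide_distrib)
    also have "real D = 2 * real K + 1" using D by simp
    finally show ?thesis by simp
  qed
qed
lemma not_dvd_small: "0 < z \<Longrightarrow> z < int m \<Longrightarrow> \<not> int m dvd z"
  using zdvd_imp_le by fastforce

lemma not_dvd_small': "z \<noteq> 0 \<Longrightarrow> \<bar>z\<bar> < int m \<Longrightarrow> \<not> int m dvd z"
  by (metis dvd_abs_iff not_dvd_small zero_less_abs_iff)

lemma fr_cross:
  assumes "odd D" "m \<ge> D" "r < 2 * (D div 2)"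
  shows "(\<Sum>t<m. fr_phi D m t r * sqrt (1 / real D)) = 0"
proof -
  let ?j = "r div 2" and ?c = "real (r mod 2) * pi / 2"
  have e: "fr_e D = 2" using assms(1) by (simp add: fr_e_def)
  have ang: "fr_ang D m t ?j = 2 * pi * real t * real_of_int (int (?j + 1)) / real m" for t
    unfolding fr_ang_def e by (simp add: algebra_simps)
  have D: "D = 2 * (D div 2) + 1" using assms(1) by simp
  have z: "int (?j + 1) < int m" using assms D by linarith
  have m: "0 < m" using assms by linarith
  have "(\<Sum>t<m. fr_phi D m t r * sqrt (1 / real D))
      = sqrt (2 / real D) * sqrt (1 / real D) * (\<Sum>t<m. cos (2 * pi * real t * real_of_int (int (?j + 1)) / real m - ?c))"
    using assms(3) by (simp add: fr_phi_def ang sum_distrib_left algebra_simps)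
  also have "(\<Sum>t<m. cos (2 * pi * real t * real_of_int (int (?j + 1)) / real m - ?c)) = 0"
    by (rule cos_sum_zero[OF m not_dvd_small]) (use z in auto)
  finally show ?thesis by simp
qed

lemma fr_orth:
  assumes D2: "D \<ge> 2" and mD: "m \<ge> D" and r: "r < D" and r': "r' < D"
  shows "(\<Sum>t<m. fr_phi D m t r * fr_phi D m t r') = (if r = r' then real m / real D else 0)"
proof -
  define K where "K = D div 2"
  have m: "0 < m" using assms by linarith
  have Ke: "2 * K + fr_e D = D + 1" by (auto simp: K_def fr_e_def)
  have e0: "fr_e D > 0" by (simp add: fr_e_def)
  show ?thesis
  proof (cases "r < 2 * K")
    case rK: True
    show ?thesis
    proof (cases "r' < 2 * K")
      case r'K: True
      define j where "j = r div 2"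
      define j' where "j' = r' div 2"
      define c where "c = real (r mod 2) * pi / 2"
      define c' where "c' = real (r' mod 2) * pi / 2"
      have jK: "j < K" "j' < K" using rK r'K by (auto simp: j_def j'_def)
      have "(\<Sum>t<m. fr_phi D m t r * fr_phi D m t r')
          = (\<Sum>t<m. (sqrt (2 / real D) * sqrt (2 / real D)) * (cos (fr_ang D m t j - c) * cos (fr_ang D m t j' - c')))"
        using rK r'K unfolding fr_phi_def K_def j_def j'_def c_def c'_def
        by (intro sum.cong[OF refl]) (simp only: if_True mult_ac)
      also have "\<dots> = (\<Sum>t<m. (1 / real D) * (cos ((fr_ang D m t j - fr_ang D m t j') - (c - c'))
           + cos ((fr_ang D m t j + fr_ang D m t j') - (c + c'))))"
      proof (intro sum.cong[OF refl])
        fix t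
        have s2: "sqrt (2 / real D) * sqrt (2 / real D) = 2 / real D" using D2 by simp
        have ar: "\<And>X Y::real. (2 / real D) * ((X + Y) / 2) = (1 / real D) * (X + Y)" using D2 by (simp add: field_simps)
        show "(sqrt (2 / real D) * sqrt (2 / real D)) * (cos (fr_ang D m t j - c) * cos (fr_ang D m t j' - c'))
          = (1 / real D) * (cos ((fr_ang D m t j - fr_ang D m t j') - (c - c'))
           + cos ((fr_ang D m t j + fr_ang D m t j') - (c + c')))"
          by (simp only: s2 cos_prod_to_sum ar)
      qed
      also have "\<dots> = (1 / real D) * ((\<Sum>t<m. cos (2 * pi * real t * real_of_int (int j - int j') / real m - (c - c')))
           + (\<Sum>t<m. cos (2 * pi * real t * real_of_int (int (j + j' + fr_e D)) / real m - (c + c'))))"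
        by (simp only: fr_ang_add fr_ang_diff sum_distrib_left[symmetric] sum.distrib)
      also have "(\<Sum>t<m. cos (2 * pi * real t * real_of_int (int (j + j' + fr_e D)) / real m - (c + c'))) = 0"
        by (rule cos_sum_zero[OF m not_dvd_small]) (use jK Ke mD e0 in auto)
      finally have eq: "(\<Sum>t<m. fr_phi D m t r * fr_phi D m t r')
          = (1 / real D) * (\<Sum>t<m. cos (2 * pi * real t * real_of_int (int j - int j') / real m - (c - c')))"
        by simp
      show ?thesis
      proof (cases "j = j'")
        case False
        have "(\<Sum>t<m. cos (2 * pi * real t * real_of_int (int j - int j') / real m - (c - c'))) = 0"
          by (rule cos_sum_zero[OF m not_dvd_small']) (use jK False mD K_def in auto)
        moreover have "r \<noteq> r'" using False by (auto simp: j_def j'_def)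
        ultimately show ?thesis using eq by simp
      next
        case True
        then have "(\<Sum>t<m. cos (2 * pi * real t * real_of_int (int j - int j') / real m - (c - c'))) = real m * cos (c - c')"
          using cos_minus[of "c - c'"] by simp
        moreover have "cos (c - c') = (if r = r' then 1 else 0)"
        proof (cases "r = r'")
          case False
          then have "r mod 2 \<noteq> r' mod 2" using True j_def j'_def
            by (metis div_mult_mod_eq)
          then have "c - c' = pi / 2 \<or> c - c' = - (pi / 2)"
            unfolding c_def c'_def by (auto simp: mod2_eq_if split: if_splits)
          then show ?thesis using False by (metis cos_pi_half cos_minus)
        qed (simp add: c_def c'_def)
        ultimately show ?thesis using eq by simp
      qed
    next
      case r'K: False
      then have "odd D" "r' = 2 * K" using r' by (auto simp: K_def)
      then have "fr_phi D m t r' = sqrt (1 / real D)" for t by (simp add: fr_phi_def K_def)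
      then show ?thesis using fr_cross[OF \<open>odd D\<close> mD rK[unfolded K_def]] rK \<open>r' = 2 * K\<close> by simp
    qed
  next
    case rK: False
    then have oD: "odd D" and rr: "r = 2 * K" using r by (auto simp: K_def)
    have phr: "fr_phi D m t r = sqrt (1 / real D)" for t using rr by (simp add: fr_phi_def K_def)
    show ?thesis
    proof (cases "r' < 2 * K")
      case True
      then show ?thesis using fr_cross[OF oD mD True[unfolded K_def]] rr phr by (simp add: mult.commute)
    next
      case False
      then have "r' = 2 * K" using r' oD by (auto simp: K_def)
      then show ?thesis using rr phr assms by simp
    qed
  qed
qed
lemma fr_phi_01:
  assumes "D \<ge> 2"
  shows "fr_phi D m t 0 = sqrt (2 / real D) * cos (fr_ang D m t 0)"
    and "fr_phi D m t 1 = sqrt (2 / real D) * sin (fr_ang D m t 0)"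
proof -
  have K: "1 < 2 * (D div 2)" using assms by presburger
  show "fr_phi D m t 0 = sqrt (2 / real D) * cos (fr_ang D m t 0)"
    using K by (simp add: fr_phi_def)
  show "fr_phi D m t 1 = sqrt (2 / real D) * sin (fr_ang D m t 0)"
    using K cos_minus_half_pi[of "fr_ang D m t 0"] by (simp add: fr_phi_def)
qed

lemma fr_inj:
  assumes D2: "D \<ge> 2" and mD: "m \<ge> D" and t: "t < m" and t': "t' < m" and ne: "t \<noteq> t'"
  shows "\<exists>r<D. fr_phi D m t r \<noteq> fr_phi D m t' r"
proof (rule ccontr)
  assume "\<not> ?thesis"
  then have e0: "fr_phi D m t 0 = fr_phi D m t' 0" and e1: "fr_phi D m t 1 = fr_phi D m t' 1"
    using D2 by auto
  let ?a = "fr_ang D m t 0" and ?b = "fr_ang D m t' 0"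
  have w: "sqrt (2 / real D) > 0" using D2 by simp
  have c: "cos ?a = cos ?b" using e0 w fr_phi_01[OF D2] by simp
  have s: "sin ?a = sin ?b" using e1 w fr_phi_01[OF D2] by simp
  have "cos (?a - ?b) = 1" using c s by (simp add: cos_diff sin_squared_eq[symmetric] power2_eq_square[symmetric]
       flip: power2_eq_square)
  then obtain n :: int where n: "?a - ?b = real_of_int n * 2 * pi" using cos_one_2pi_int by blast
  define e where "e = real (fr_e D)"
  have e12: "1 \<le> e" "e \<le> 2" by (auto simp: e_def fr_e_def)
  have m0: "real m > 0" using t by simp
  have h: "?a - ?b = pi * (real t - real t') * e / real m" using m0 by (simp add: fr_ang_def e_def field_simps)
  have "pi * (real t - real t') * e / real m = real_of_int n * 2 * pi" using h n by linarith
  then have "pi * ((real t - real t') * e) = pi * (2 * real_of_int n * real m)"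
    using m0 by (simp add: field_simps)
  then have eq: "(real t - real t') * e = 2 * real_of_int n * real m"
    by (rule mult_left_cancel[OF pi_neq_zero, THEN iffD1])
  have lt: "\<bar>real t - real t'\<bar> < real m" using t t' by linarith
  have "\<bar>real t - real t'\<bar> * e \<le> \<bar>real t - real t'\<bar> * 2" by (rule mult_left_mono) (use e12 in auto)
  then have "\<bar>(real t - real t') * e\<bar> < 2 * real m"
    using e12 lt by (simp add: abs_mult)
  then have "\<bar>real_of_int n\<bar> < 1" using eq m0 by (simp add: abs_mult)
  then have "n = 0" by linarith
  then have "real t = real t'" using eq e12 by simp
  then show False using ne by simp
qed

lemma fr_anti:
  assumes D2: "D \<ge> 2" and mD: "m \<ge> D" and t: "t < m" and t': "t' < m"
  shows "\<exists>r<D. fr_phi D m t r \<noteq> - fr_phi D m t' r"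
proof (cases "even D")
  case False
  have "2 * (D div 2) < D" using False by presburger
  moreover have "fr_phi D m t (2 * (D div 2)) = sqrt (1 / real D)" "fr_phi D m t' (2 * (D div 2)) = sqrt (1 / real D)"
    by (simp_all add: fr_phi_def)
  moreover have "sqrt (1 / real D) > 0" using D2 by simp
  ultimately show ?thesis by (intro exI[where x="2 * (D div 2)"]) auto
next
  case True
  show ?thesis
  proof (rule ccontr)
    assume "\<not> ?thesis"
    then have e0: "fr_phi D m t 0 = - fr_phi D m t' 0" and e1: "fr_phi D m t 1 = - fr_phi D m t' 1"
      using D2 by auto
    let ?a = "fr_ang D m t 0" and ?b = "fr_ang D m t' 0"
    have w: "sqrt (2 / real D) > 0" using D2 by simp
    have wne: "sqrt (2 / real D) \<noteq> 0" using w by simp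
    have "sqrt (2 / real D) * cos ?a = sqrt (2 / real D) * (- cos ?b)" using e0 fr_phi_01[OF D2] by simp
    then have c: "cos ?a = - cos ?b" by (rule mult_left_cancel[OF wne, THEN iffD1])
    have "sqrt (2 / real D) * sin ?a = sqrt (2 / real D) * (- sin ?b)" using e1 fr_phi_01[OF D2] by simp
    then have s: "sin ?a = - sin ?b" by (rule mult_left_cancel[OF wne, THEN iffD1])
    have e: "fr_e D = 1" using True by (simp add: fr_e_def)
    have ab: "?a = pi * real t / real m" "?b = pi * real t' / real m" by (simp_all add: fr_ang_def e)
    have m0: "real m > 0" using t by simp
    have range: "0 \<le> pi * real x / real m \<and> pi * real x / real m < pi" if "x < m" for x
      using that m0 by (simp add: field_simps)
    have sa: "sin ?a \<ge> 0" "sin ?b \<ge> 0" using range[OF t] range[OF t'] ab by (auto intro!: sin_ge_zero)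
    then have "sin ?a = 0" using s by simp
    have a0: "?a = 0"
    proof (rule ccontr)
      assume "?a \<noteq> 0"
      then have "0 < ?a" using range[OF t] ab by simp
      then have "sin ?a > 0" using range[OF t] ab by (intro sin_gt_zero) auto
      with \<open>sin ?a = 0\<close> show False by simp
    qed
    have "sin ?b = 0" using s sa by simp
    have b0: "?b = 0"
    proof (rule ccontr)
      assume "?b \<noteq> 0"
      then have "0 < ?b" using range[OF t'] ab by simp
      then have "sin ?b > 0" using range[OF t'] ab by (intro sin_gt_zero) auto
      with \<open>sin ?b = 0\<close> show False by simp
    qed
    show False using c a0 b0 by simp
  qed
qed
lemma frame_exists:
  fixes m :: nat
  assumes D2: "CARD('n::finite) \<ge> 2" and mD: "m \<ge> CARD('n)"
  shows "\<exists>Y :: (real^'n) set. finite Y \<and> Y \<noteq> {} \<and> Y \<subseteq> sphere 0 1 \<and> (\<forall>y\<in>Y. - y \<notin> Y) \<and> card Y = m \<and>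
     (\<forall>i k. (\<Sum>y\<in>Y. y$i * y$k) = (if i = k then real (card Y) / CARD('n) else 0))"
proof -
  define D where "D = CARD('n)"
  obtain \<iota> :: "'n \<Rightarrow> nat" where bij: "bij_betw \<iota> UNIV {..<D}"
    using ex_bij_betw_finite_nat[of "UNIV :: 'n set"] by (auto simp: D_def lessThan_atLeast0)
  have \<iota>D: "\<iota> i < D" for i using bij by (auto simp: bij_betw_def)
  have \<iota>inj: "\<iota> i = \<iota> k \<longleftrightarrow> i = k" for i k using bij by (auto simp: bij_betw_def inj_def)
  have \<iota>surj: "\<exists>i. \<iota> i = r" if "r < D" for r 
  proof -
    have "r \<in> range \<iota>" using bij that by (simp add: bij_betw_def)
    then show ?thesis by auto
  qed
  have D2': "D \<ge> 2" "m \<ge> D" using D2 mD by (simp_all add: D_def)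
  define v where "v t = (\<chi> i. fr_phi D m t (\<iota> i))" for t
  define Y where "Y = v ` {..<m}"
  have reidx: "(\<Sum>i\<in>UNIV. g (\<iota> i)) = (\<Sum>r<D. g r)" for g :: "nat \<Rightarrow> real"
    using sum.reindex_bij_betw[OF bij, of g] .
  have injv: "inj_on v {..<m}"
  proof (rule inj_onI)
    fix t t' assume t: "t \<in> {..<m}" and t': "t' \<in> {..<m}" and eq: "v t = v t'"
    show "t = t'"
    proof (rule ccontr)
      assume "t \<noteq> t'"
      then obtain r where "r < D" "fr_phi D m t r \<noteq> fr_phi D m t' r"
        using fr_inj[OF D2'(1,2)] t t' by auto
      moreover obtain i where "\<iota> i = r" using \<iota>surj[OF \<open>r < D\<close>] by blast
      ultimately have "v t $ i \<noteq> v t' $ i" by (simp add: v_def)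
      then show False using eq by simp
    qed
  qed
  have cardY: "card Y = m" unfolding Y_def using card_image[OF injv] by simp
  have "finite Y" unfolding Y_def by simp
  moreover have "Y \<noteq> {}" using cardY D2' by (metis card.empty not_numeral_le_zero le_trans)
  moreover have "Y \<subseteq> sphere 0 1"
  proof
    fix y assume "y \<in> Y"
    then obtain t where y: "y = v t" unfolding Y_def by auto
    have "y \<bullet> y = (\<Sum>i\<in>UNIV. (fr_phi D m t (\<iota> i))^2)"
      by (simp add: y v_def inner_vec_def power2_eq_square)
    also have "\<dots> = 1" using reidx[of "\<lambda>r. (fr_phi D m t r)^2"] fr_norm[of D m t] D2' by simp
    finally show "y \<in> sphere 0 1" by (simp add: norm_eq_1)
  qed
  moreover have "\<forall>y\<in>Y. - y \<notin> Y"
  proof (intro ballI notI)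
    fix y assume "y \<in> Y" "- y \<in> Y"
    then obtain t t' where t: "t < m" "y = v t" and t': "t' < m" "- y = v t'" unfolding Y_def by auto
    obtain r where "r < D" "fr_phi D m t r \<noteq> - fr_phi D m t' r"
      using fr_anti[OF D2'(1,2) t(1) t'(1)] by auto
    moreover obtain i where "\<iota> i = r" using \<iota>surj[OF \<open>r < D\<close>] by blast
    ultimately have "v t $ i \<noteq> - (v t' $ i)" by (simp add: v_def)
    then show False using t t' by (metis vector_uminus_component minus_minus)
  qed
  moreover have "\<forall>i k. (\<Sum>y\<in>Y. y$i * y$k) = (if i = k then real (card Y) / CARD('n) else 0)"
  proof (intro allI)
    fix i k
    have "(\<Sum>y\<in>Y. y$i * y$k) = (\<Sum>t<m. fr_phi D m t (\<iota> i) * fr_phi D m t (\<iota> k))"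
      unfolding Y_def using sum.reindex[OF injv, of "\<lambda>y. y$i * y$k"] by (simp add: v_def)
    also have "\<dots> = (if \<iota> i = \<iota> k then real m / real D else 0)"
      by (rule fr_orth[OF D2'(1,2) \<iota>D \<iota>D])
    finally show "(\<Sum>y\<in>Y. y$i * y$k) = (if i = k then real (card Y) / CARD('n) else 0)"
      using \<iota>inj cardY by (simp add: D_def)
  qed
  ultimately show ?thesis using cardY by blast
qed

theorem proposition3p4:
  fixes d n :: nat
  assumes "CARD('n::finite) = d + 1"
    and "d \<ge> 1"
    and "even n"
    and "n \<ge> 2 * d + 2"
    and "\<not> (odd d \<and> n = 2 * d + 4)"
  shows "\<exists>X :: (real^'n) set. spherical_design 3 X \<and> card X = n"
proof -
  have D2: "CARD('n) \<ge> 2" using assms(1,2) by simp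
  have mD: "n div 2 \<ge> CARD('n)" using assms(1,3,4) by auto
  obtain Y :: "(real^'n) set" where Y: "finite Y" "Y \<noteq> {}" "Y \<subseteq> sphere 0 1" "\<forall>y\<in>Y. - y \<notin> Y"
    "card Y = n div 2" "\<forall>i k. (\<Sum>y\<in>Y. y$i * y$k) = (if i = k then real (card Y) / CARD('n) else 0)"
    using frame_exists[OF D2 mD] by blast
  have "spherical_design 3 (Y \<union> uminus ` Y)" by (rule design_from_frame[OF Y(1-4,6)])
  moreover have "card (Y \<union> uminus ` Y) = n" using sum_sym(2)[OF Y(1,4)] Y(5) assms(3) by simp
  ultimately show ?thesis by blast
qed

end
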